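(* Let $G$ be a graph, $e=\{u,v\}\in\binom{V(G)}{2}$, $G^+=G+e$ and $G^-=G-e$. For $\circ\in\{+,-\}$ let $S^\circ=S(G^\circ)$, $R^\circ=R(G^\circ)$, and $W^\circ=C_u(G^\circ)\cup C_v(G^\circ)$. Then: (i) if $\{u,v\} \cap S^+ = \varnothing$, then $N_{G^-}(W^+) \subseteq N_{G^+}(W^+) \subseteq S^+ \subseteq S^-$, $R^- \subseteq R^+$, and $W^- \subseteq W^+$; (ii) if $\{u,v\} \cap S^+ \neq \varnothing$, then $N_{G^-}(W^-) \subseteq N_{G^+}(W^-) \subseteq S^- \subseteq S^+$, $R^+ \subseteq R^-$, and $W^+ \subseteq W^-$.
   Context: $G+e$ and $G-e$ are the graphs on $V(G)$ with edge sets $E(G)\cup\{e\}$ and $E(G)\setminus\{e\}$. For a graph $H$ and $X\subseteq V(H)$, $N_H(X)=\{x\in V(H)\setminus X: xy\in E(H)\text{ for some }y\in X\}$. The strong $4$-core $S(H)$ is the maximal $X\subseteq V(H)$ with $|N_H(x)\cap X|\ge4$ for all $x\in X\cup N_H(X)$; $P(H)=N_H(S(H))$, $R(H)=V(H)\setminus(S(H)\cup P(H))$. For $x\in P(H)\cup R(H)$, $C_x(H)$ is the vertex set of the component of $H[P(H)\cup R(H)]$ (equivalently of $H-S(H)$) containing $x$; for $x\in S(H)$, $C_x(H)=\varnothing$. *)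

theory Defs
  imports Main
begin

definition graph :: "'a set \<Rightarrow> 'a set set \<Rightarrow> bool" where
  "graph V E \<longleftrightarrow> finite V \<and> (\<forall>e\<in>E. \<exists>x y. x \<noteq> y \<and> x \<in> V \<and> y \<in> V \<and> e = {x, y})"

definition add_edge :: "'a set set \<Rightarrow> 'a set \<Rightarrow> 'a set set" where
  "add_edge E e = E \<union> {e}"

definition del_edge :: "'a set set \<Rightarrow> 'a set \<Rightarrow> 'a set set" where
  "del_edge E e = E - {e}"

definition nbrs :: "'a set set \<Rightarrow> 'a \<Rightarrow> 'a set" where
  "nbrs E x = {y. {x, y} \<in> E}"

definition nbhd :: "'a set \<Rightarrow> 'a set set \<Rightarrow> 'a set \<Rightarrow> 'a set" where
  "nbhd V E X = {x \<in> V - X. \<exists>y\<in>X. {x, y} \<in> E}"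

definition core_prop :: "'a set \<Rightarrow> 'a set set \<Rightarrow> 'a set \<Rightarrow> bool" where
  "core_prop V E X \<longleftrightarrow> X \<subseteq> V \<and>
     (\<forall>x \<in> X \<union> nbhd V E X. card (nbrs E x \<inter> X) \<ge> 4)"

text \<open>The strong 4-core: the maximal (= union of all, since the property is closed
  under unions) set with the core property.\<close>
definition S4 :: "'a set \<Rightarrow> 'a set set \<Rightarrow> 'a set" where
  "S4 V E = \<Union> {X. core_prop V E X}"

definition P4 :: "'a set \<Rightarrow> 'a set set \<Rightarrow> 'a set" where
  "P4 V E = nbhd V E (S4 V E)"

definition R4 :: "'a set \<Rightarrow> 'a set set \<Rightarrow> 'a set" where
  "R4 V E = V - (S4 V E \<union> P4 V E)"

text \<open>C_x(H): vertex set of the component of H - S(H) containing x (empty if x in S(H)).\<close>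
definition comp4 :: "'a set \<Rightarrow> 'a set set \<Rightarrow> 'a \<Rightarrow> 'a set" where
  "comp4 V E x = (let U = V - S4 V E in
     if x \<in> U then {y. (\<lambda>a b. a \<in> U \<and> b \<in> U \<and> {a, b} \<in> E)\<^sup>*\<^sup>* x y} else {})"

end

theory Submission
  imports Defs
begin

lemma S4_max: "core_prop V E X \<Longrightarrow> X \<subseteq> S4 V E"
  unfolding S4_def by blast

lemma S4_sub: "S4 V E \<subseteq> V"
  unfolding S4_def core_prop_def by blast

lemma S4_core:
  assumes fin: "finite V"
  shows "core_prop V E (S4 V E)"
  unfolding core_prop_def
proof (intro conjI ballI)
  show "S4 V E \<subseteq> V" by (rule S4_sub)
  fix x assume x: "x \<in> S4 V E \<union> nbhd V E (S4 V E)"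
  obtain X where X: "core_prop V E X" "x \<in> X \<union> nbhd V E X"
  proof (cases "x \<in> S4 V E")
    case True
    then show ?thesis using that unfolding S4_def by blast
  next
    case False
    then obtain y where y: "y \<in> S4 V E" "{x,y} \<in> E" "x \<in> V" using x unfolding nbhd_def by blast
    then obtain X where "core_prop V E X" "y \<in> X" unfolding S4_def by blast
    moreover have "x \<notin> X" using False calculation(1) S4_max by blast
    ultimately show ?thesis using that[of X] y unfolding nbhd_def by blast
  qed
  have "4 \<le> card (nbrs E x \<inter> X)" using X unfolding core_prop_def by blast
  also have "\<dots> \<le> card (nbrs E x \<inter> S4 V E)"
    apply (rule card_mono)
    using fin S4_sub apply (meson finite_Int finite_subset)
    using S4_max[OF X(1)] by blast
  finally show "4 \<le> card (nbrs E x \<inter> S4 V E)" .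
qed

lemma rt_in:
  assumes "(\<lambda>a b. a \<in> U \<and> b \<in> U \<and> P a b)\<^sup>*\<^sup>* x y" "x \<in> U"
  shows "y \<in> U"
  using assms by (induction rule: rtranclp_induct) auto

lemma comp_nbhd:
  assumes "y \<in> comp4 V F w" "x \<in> V" "x \<notin> comp4 V F w" "{x,y} \<in> F"
  shows "x \<in> S4 V F"
proof (rule ccontr)
  assume nx: "x \<notin> S4 V F"
  let ?U = "V - S4 V F"
  let ?r = "\<lambda>a b. a \<in> ?U \<and> b \<in> ?U \<and> {a, b} \<in> F"
  have w: "w \<in> ?U" and p: "?r\<^sup>*\<^sup>* w y" using assms(1) unfolding comp4_def Let_def
    by (auto split: if_splits)
  have yU: "y \<in> ?U" using rt_in[OF p w] .
  have r: "?r y x" using yU nx assms(2,4) by (simp add: insert_commute)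
  have "?r\<^sup>*\<^sup>* w x" by (rule rtranclp.rtrancl_into_rtrancl[OF p r])
  hence "x \<in> comp4 V F w" using w unfolding comp4_def Let_def by simp
  thus False using assms(3) by blast
qed

lemma comp_sub:
  assumes "S4 V F2 \<subseteq> S4 V F1"
    and "\<And>a b. a \<in> V - S4 V F1 \<Longrightarrow> b \<in> V - S4 V F1 \<Longrightarrow> {a,b} \<in> F1 \<Longrightarrow> {a,b} \<in> F2"
  shows "comp4 V F1 w \<subseteq> comp4 V F2 w"
proof
  fix y assume y: "y \<in> comp4 V F1 w"
  let ?r1 = "\<lambda>a b. a \<in> V - S4 V F1 \<and> b \<in> V - S4 V F1 \<and> {a, b} \<in> F1"
  let ?r2 = "\<lambda>a b. a \<in> V - S4 V F2 \<and> b \<in> V - S4 V F2 \<and> {a, b} \<in> F2"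
  have w: "w \<in> V - S4 V F1" and p: "?r1\<^sup>*\<^sup>* w y" using y unfolding comp4_def Let_def
    by (auto split: if_splits)
  have "?r1 \<le> ?r2" using assms by blast
  hence "?r2\<^sup>*\<^sup>* w y" using p rtranclp_mono by blast
  moreover have "w \<in> V - S4 V F2" using w assms(1) by blast
  ultimately show "y \<in> comp4 V F2 w" unfolding comp4_def Let_def by simp
qed

theorem lemma4p9:
  fixes V :: "'a set" and E :: "'a set set" and u v :: 'a
  assumes "graph V E" and "u \<in> V" and "v \<in> V" and "u \<noteq> v"
  defines "Ep \<equiv> add_edge E {u, v}" and "Em \<equiv> del_edge E {u, v}"
  defines "Sp \<equiv> S4 V Ep" and "Sm \<equiv> S4 V Em"
      and "Rp \<equiv> R4 V Ep" and "Rm \<equiv> R4 V Em"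
      and "Wp \<equiv> comp4 V Ep u \<union> comp4 V Ep v"
      and "Wm \<equiv> comp4 V Em u \<union> comp4 V Em v"
  shows "({u, v} \<inter> Sp = {} \<longrightarrow>
            nbhd V Em Wp \<subseteq> nbhd V Ep Wp \<and> nbhd V Ep Wp \<subseteq> Sp \<and> Sp \<subseteq> Sm
            \<and> Rm \<subseteq> Rp \<and> Wm \<subseteq> Wp)
       \<and> ({u, v} \<inter> Sp \<noteq> {} \<longrightarrow>
            nbhd V Em Wm \<subseteq> nbhd V Ep Wm \<and> nbhd V Ep Wm \<subseteq> Sm \<and> Sm \<subseteq> Sp
            \<and> Rp \<subseteq> Rm \<and> Wp \<subseteq> Wm)"
proof (intro conjI impI)
  have fin: "finite V" using assms(1) unfolding graph_def by blast
  have EmEp: "Em \<subseteq> Ep" unfolding Em_def Ep_def add_edge_def del_edge_def by blast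
  have Ep_iff: "\<And>f. f \<in> Ep \<longleftrightarrow> f \<in> Em \<or> f = {u,v}"
    unfolding Em_def Ep_def add_edge_def del_edge_def by blast
  have nb_mono: "\<And>X. nbhd V Em X \<subseteq> nbhd V Ep X" using EmEp unfolding nbhd_def by blast
  have coreP: "core_prop V Ep Sp" unfolding Sp_def using S4_core[OF fin] .
  have coreM: "core_prop V Em Sm" unfolding Sm_def using S4_core[OF fin] .
  {
    assume A: "{u, v} \<inter> Sp = {}"
    show "nbhd V Em Wp \<subseteq> nbhd V Ep Wp" by (rule nb_mono)
    show "nbhd V Ep Wp \<subseteq> Sp"
    proof
      fix x assume "x \<in> nbhd V Ep Wp"
      then obtain y where "x \<in> V" "x \<notin> Wp" "y \<in> Wp" "{x,y} \<in> Ep" unfolding nbhd_def by blast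
      then show "x \<in> Sp" unfolding Wp_def Sp_def using comp_nbhd by (metis Un_iff)
    qed
    have SpSm: "Sp \<subseteq> Sm"
    proof -
      have "core_prop V Em Sp"
        unfolding core_prop_def
      proof (intro conjI ballI)
        show "Sp \<subseteq> V" using coreP unfolding core_prop_def by blast
        fix x assume x: "x \<in> Sp \<union> nbhd V Em Sp"
        hence "x \<in> Sp \<union> nbhd V Ep Sp" using nb_mono by blast
        hence "4 \<le> card (nbrs Ep x \<inter> Sp)" using coreP unfolding core_prop_def by blast
        moreover have "nbrs Ep x \<inter> Sp = nbrs Em x \<inter> Sp"
        proof
          show "nbrs Ep x \<inter> Sp \<subseteq> nbrs Em x \<inter> Sp"
          proof
            fix y assume y: "y \<in> nbrs Ep x \<inter> Sp"
            hence "{x,y} \<noteq> {u,v}" using A by (auto simp: doubleton_eq_iff)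
            thus "y \<in> nbrs Em x \<inter> Sp" using y Ep_iff unfolding nbrs_def by blast
          qed
          show "nbrs Em x \<inter> Sp \<subseteq> nbrs Ep x \<inter> Sp" using EmEp unfolding nbrs_def by blast
        qed
        ultimately show "4 \<le> card (nbrs Em x \<inter> Sp)" by simp
      qed
      thus ?thesis unfolding Sm_def by (rule S4_max)
    qed
    show "Sp \<subseteq> Sm" by (rule SpSm)
    show "Rm \<subseteq> Rp"
    proof
      fix x assume x: "x \<in> Rm"
      hence xV: "x \<in> V" and xS: "x \<notin> Sm" and xN: "x \<notin> nbhd V Em Sm"
        unfolding Rm_def R4_def P4_def Sm_def by auto
      have "x \<notin> Sp" using xS SpSm by blast
      moreover have "x \<notin> nbhd V Ep Sp"
      proof
        assume "x \<in> nbhd V Ep Sp"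
        then obtain y where y: "y \<in> Sp" "{x,y} \<in> Ep" unfolding nbhd_def by blast
        hence "{x,y} \<noteq> {u,v}" using A by (auto simp: doubleton_eq_iff)
        hence "{x,y} \<in> Em" using y Ep_iff by blast
        thus False using xN xV xS y SpSm unfolding nbhd_def by blast
      qed
      ultimately show "x \<in> Rp" using xV unfolding Rp_def R4_def P4_def Sp_def by auto
    qed
    have "\<And>w. comp4 V Em w \<subseteq> comp4 V Ep w"
      by (rule comp_sub) (use SpSm EmEp in \<open>auto simp: Sp_def Sm_def\<close>)
    thus "Wm \<subseteq> Wp" unfolding Wm_def Wp_def by blast
  }
  {
    assume A: "{u, v} \<inter> Sp \<noteq> {}"
    show "nbhd V Em Wm \<subseteq> nbhd V Ep Wm" by (rule nb_mono)
    have SmSp: "Sm \<subseteq> Sp"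
    proof -
      have "core_prop V Ep (Sm \<union> Sp)"
        unfolding core_prop_def
      proof (intro conjI ballI)
        show "Sm \<union> Sp \<subseteq> V" using coreP coreM unfolding core_prop_def by blast
        fix x assume x: "x \<in> (Sm \<union> Sp) \<union> nbhd V Ep (Sm \<union> Sp)"
        have fx: "finite (nbrs Ep x \<inter> (Sm \<union> Sp))"
          using fin \<open>Sm \<union> Sp \<subseteq> V\<close> by (meson finite_Int finite_subset)
        show "4 \<le> card (nbrs Ep x \<inter> (Sm \<union> Sp))"
        proof (cases "x \<in> Sp \<union> nbhd V Ep Sp")
          case True
          hence "4 \<le> card (nbrs Ep x \<inter> Sp)" using coreP unfolding core_prop_def by blast
          also have "\<dots> \<le> card (nbrs Ep x \<inter> (Sm \<union> Sp))" by (rule card_mono[OF fx]) blast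
          finally show ?thesis .
        next
          case False
          have "x \<in> Sm \<union> nbhd V Em Sm"
          proof (rule ccontr)
            assume nx: "x \<notin> Sm \<union> nbhd V Em Sm"
            from x False nx have "x \<in> nbhd V Ep Sm"
              unfolding nbhd_def by blast
            then obtain y where y: "x \<in> V" "y \<in> Sm" "{x,y} \<in> Ep" unfolding nbhd_def by blast
            have "{x,y} \<notin> Em" using nx y unfolding nbhd_def by blast
            hence "{x,y} = {u,v}" using y Ep_iff by blast
            hence xy: "(x = u \<and> y = v) \<or> (x = v \<and> y = u)" by (auto simp: doubleton_eq_iff)
            have "x \<notin> Sp" using False by blast
            hence "y \<in> Sp" using xy A by blast
            hence "x \<in> nbhd V Ep Sp" using y \<open>x \<notin> Sp\<close> unfolding nbhd_def by blast
            thus False using False by blast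
          qed
          hence "4 \<le> card (nbrs Em x \<inter> Sm)" using coreM unfolding core_prop_def by blast
          also have "\<dots> \<le> card (nbrs Ep x \<inter> (Sm \<union> Sp))"
            by (rule card_mono[OF fx]) (use EmEp in \<open>auto simp: nbrs_def\<close>)
          finally show ?thesis .
        qed
      qed
      hence "Sm \<union> Sp \<subseteq> Sp" unfolding Sp_def by (rule S4_max)
      thus ?thesis by blast
    qed
    show "Sm \<subseteq> Sp" by (rule SmSp)
    show "nbhd V Ep Wm \<subseteq> Sm"
    proof
      fix x assume "x \<in> nbhd V Ep Wm"
      then obtain y where xy: "x \<in> V" "x \<notin> Wm" "y \<in> Wm" "{x,y} \<in> Ep" unfolding nbhd_def by blast
      show "x \<in> Sm"
      proof (cases "{x,y} \<in> Em")
        case True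
        then show ?thesis using xy unfolding Wm_def Sm_def using comp_nbhd by (metis Un_iff)
      next
        case False
        hence "{x,y} = {u,v}" using xy Ep_iff by blast
        hence "x = u \<or> x = v" by (auto simp: doubleton_eq_iff)
        moreover have "\<And>w. w \<in> V \<Longrightarrow> w \<notin> Sm \<Longrightarrow> w \<in> comp4 V Em w"
          unfolding comp4_def Let_def Sm_def by simp
        ultimately show ?thesis using xy unfolding Wm_def by blast
      qed
    qed
    show "Rp \<subseteq> Rm"
      using SmSp EmEp unfolding Rp_def Rm_def R4_def P4_def Sp_def Sm_def nbhd_def by blast
    have "\<And>w. comp4 V Ep w \<subseteq> comp4 V Em w"
    proof (rule comp_sub)
      show "S4 V Em \<subseteq> S4 V Ep" using SmSp unfolding Sm_def Sp_def .
      fix a b assume "a \<in> V - S4 V Ep" "b \<in> V - S4 V Ep" "{a,b} \<in> Ep"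
      moreover have "{a,b} \<noteq> {u,v}" using calculation A unfolding Sp_def
        by (auto simp: doubleton_eq_iff)
      ultimately show "{a,b} \<in> Em" using Ep_iff by blast
    qed
    thus "Wp \<subseteq> Wm" unfolding Wm_def Wp_def by blast
  }
qed

end
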